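(* Let $n\ge 2$ and let $D$ be an $n\times n$ unit spherical Euclidean distance matrix (EDM) of embedding dimension $r$, and let $w\in\mathbb{R}^n$ be a vector with $Dw=e$. Define the symmetric matrix $\Delta$ by $D = 2(E-I) + 2\Delta$. Then $\lambda_{\max}(\Delta)=1$, $w$ is an eigenvector of $\Delta$ associated with $\lambda_{\max}(\Delta)$, and $r = n - m(\lambda_{\max}(\Delta))$, where $m(\lambda_{\max}(\Delta))$ denotes the multiplicity of the eigenvalue $\lambda_{\max}(\Delta)$.
   Context: $e$ denotes the all-ones vector in $\mathbb{R}^n$, $E$ the $n\times n$ all-ones matrix, $I$ the $n\times n$ identity matrix. An $n\times n$ matrix $D=(d_{ij})$ is a Euclidean distance matrix (EDM) if there exist points $p^1,\dots,p^n$ in some Euclidean space with $d_{ij}=\|p^i-p^j\|^2$ for all $i,j$; the dimension of the affine span of these points is the embedding dimension of $D$. $D$ is a unit spherical EDM if such points can be chosen to lie on a sphere of radius $1$. For a real symmetric matrix $A$, $\lambda_{\max}(A)$ is its largest eigenvalue. *)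

theory Defs
  imports "Jordan_Normal_Form.Char_Poly" "Jordan_Normal_Form.DL_Rank"
begin

definition ones_vec :: "nat \<Rightarrow> real vec" where
  "ones_vec n = vec n (\<lambda>_. 1)"

definition ones_mat :: "nat \<Rightarrow> real mat" where
  "ones_mat n = mat n n (\<lambda>_. 1)"

definition sqdist_vec :: "real vec \<Rightarrow> real vec \<Rightarrow> real" where
  "sqdist_vec x y = (x - y) \<bullet> (x - y)"

text \<open>Points p 0, ..., p (n-1) in R^r whose affine span is all of R^r,
  i.e. the differences p j - p 0 span R^r (the matrix with these columns has rank r).\<close>
definition affinely_spanning :: "nat \<Rightarrow> nat \<Rightarrow> (nat \<Rightarrow> real vec) \<Rightarrow> bool" where
  "affinely_spanning n r p \<longleftrightarrow>
     (\<forall>i<n. p i \<in> carrier_vec r) \<and>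
     vec_space.rank r (mat r n (\<lambda>(a, j). (p j - p 0) $ a)) = r"

definition edm_config :: "nat \<Rightarrow> real mat \<Rightarrow> nat \<Rightarrow> (nat \<Rightarrow> real vec) \<Rightarrow> bool" where
  "edm_config n D r p \<longleftrightarrow>
     D \<in> carrier_mat n n \<and> affinely_spanning n r p \<and>
     (\<forall>i<n. \<forall>j<n. D $$ (i, j) = sqdist_vec (p i) (p j))"

definition unit_spherical_edm :: "nat \<Rightarrow> real mat \<Rightarrow> nat \<Rightarrow> bool" where
  "unit_spherical_edm n D r \<longleftrightarrow>
     (\<exists>p c. edm_config n D r p \<and> c \<in> carrier_vec r \<and>
            (\<forall>i<n. sqdist_vec (p i) c = 1))"

definition lambda_max :: "real mat \<Rightarrow> real" where
  "lambda_max A = Max {k. eigenvalue A k}"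

text \<open>Multiplicity of an eigenvalue (as root of the characteristic polynomial;
  for symmetric matrices this equals the geometric multiplicity).\<close>
definition eig_mult :: "real mat \<Rightarrow> real \<Rightarrow> nat" where
  "eig_mult A k = Polynomial.order k (char_poly A)"

end

theory Submission
  imports Defs
begin


lemma sylvester_det:
  fixes A :: "'a::idom mat"
  assumes A: "A \<in> carrier_mat n r" and B: "B \<in> carrier_mat r n"
  shows "z^n * det (z \<cdot>\<^sub>m 1\<^sub>m r - B * A) = z^r * det (z \<cdot>\<^sub>m 1\<^sub>m n - A * B)"
proof -
  let ?P = "four_block_mat (z \<cdot>\<^sub>m 1\<^sub>m r) B A (1\<^sub>m n)"
  let ?L = "four_block_mat (1\<^sub>m r) (0\<^sub>m r n) (- A) (1\<^sub>m n)"
  let ?Q = "four_block_mat (1\<^sub>m r) (- B) (0\<^sub>m n r) (z \<cdot>\<^sub>m 1\<^sub>m n)"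
  have P: "?P \<in> carrier_mat (r+n) (r+n)" using A B by auto
  have L: "?L \<in> carrier_mat (r+n) (r+n)" using A B by auto
  have Q: "?Q \<in> carrier_mat (r+n) (r+n)" using A B by auto
  have BA: "B * A \<in> carrier_mat r r" using A B by auto
  have AB: "A * B \<in> carrier_mat n n" using A B by auto
  have zr: "z \<cdot>\<^sub>m 1\<^sub>m r \<in> carrier_mat r r" by auto
  have zn: "z \<cdot>\<^sub>m 1\<^sub>m n \<in> carrier_mat n n" by auto
  have mA: "- A \<in> carrier_mat n r" using A by auto
  have mB: "- B \<in> carrier_mat r n" using B by auto
  have ifs: "\<And>(a::'a) b P. a * (b * (if P then 1 else 0)) = (if P then a * b else 0)"
     "\<And>(a::'a) b P. b * (if P then 1 else 0) * a = (if P then b * a else 0)" by auto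
  have zBA: "z \<cdot>\<^sub>m 1\<^sub>m r - B * A \<in> carrier_mat r r" using BA by (intro minus_carrier_mat; auto)
  have zAB: "z \<cdot>\<^sub>m 1\<^sub>m n - A * B \<in> carrier_mat n n" using AB by (intro minus_carrier_mat; auto)
  have PL: "?P * ?L = four_block_mat (z \<cdot>\<^sub>m 1\<^sub>m r - B * A) B (0\<^sub>m n r) (1\<^sub>m n)"
    apply (subst mult_four_block_mat[OF zr B A one_carrier_mat one_carrier_mat zero_carrier_mat mA one_carrier_mat])
    apply (rule cong_four_block_mat)
    using A B by (auto intro!: eq_matI simp: scalar_prod_def sum_negf ifs mult.commute)
  have PQ: "?P * ?Q = four_block_mat (z \<cdot>\<^sub>m 1\<^sub>m r) (0\<^sub>m r n) A (z \<cdot>\<^sub>m 1\<^sub>m n - A * B)"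
    apply (subst mult_four_block_mat[OF zr B A one_carrier_mat one_carrier_mat mB zero_carrier_mat zn])
    apply (rule cong_four_block_mat)
    using A B by (auto intro!: eq_matI simp: scalar_prod_def sum_negf ifs mult.commute)
  have dL: "det ?L = 1"
    by (subst det_four_block_mat_upper_right_zero[OF one_carrier_mat refl mA one_carrier_mat], simp)
  have dQ: "det ?Q = z^n"
    by (subst det_four_block_mat_lower_left_zero[OF one_carrier_mat mB refl zn], simp)
  have "det ?P = det (z \<cdot>\<^sub>m 1\<^sub>m r - B * A)"
    using det_mult[OF P L] dL PL
    using det_four_block_mat_lower_left_zero[OF zBA B refl one_carrier_mat]
    by simp
  moreover have "det ?P * z^n = z^r * det (z \<cdot>\<^sub>m 1\<^sub>m n - A * B)"
    using det_mult[OF P Q] dQ PQ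
    using det_four_block_mat_upper_right_zero[OF zr refl A zAB]
    by (simp add: mult.commute)
  ultimately show ?thesis by (simp add: mult.commute)
qed


lemma span_zero:
  fixes Y :: "real mat"
  assumes Y: "Y \<in> carrier_mat r m" and rk: "vec_space.rank r Y = r"
    and v: "v \<in> carrier_vec r" and orth: "\<And>j. j < m \<Longrightarrow> col Y j \<bullet> v = 0"
  shows "v = 0\<^sub>v r"
proof -
  interpret vec_space "TYPE(real)" r .
  obtain S where max: "maximal S (\<lambda>T. T \<subseteq> set (cols Y) \<and> lin_indpt T)"
    using maximal_exists[of "(\<lambda>T. T \<subseteq> set (cols Y) \<and> lin_indpt T)" "card (set (cols Y))" "{}"]
    by (meson List.finite_set card_mono empty_iff empty_subsetI finite_lin_indpt2 rev_finite_subset)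
  have cardS: "card S = r" using rank_card_indpt[OF Y max] rk by simp
  have SY: "S \<subseteq> set (cols Y)" and li: "lin_indpt S" using max unfolding maximal_def by auto
  have finS: "finite S" using SY finite_subset by blast
  obtain L where L: "set L = S" "distinct L" using finite_distinct_list[OF finS] by blast
  have lenL: "length L = r" using L cardS distinct_card by fastforce
  have Lc: "set L \<subseteq> carrier_vec r" using L SY cols_dim Y by blast
  define M where "M = mat_of_cols r L"
  have M: "M \<in> carrier_mat r r" unfolding M_def using lenL by (metis mat_of_cols_carrier(1))
  have cM: "cols M = L" unfolding M_def using Lc by simp
  have "rank M = r" using lin_indpt_full_rank[OF M] cM L li by simp
  hence dM: "det M \<noteq> 0" using det_rank_iff[OF M] by simp
  have Mt: "transpose_mat M \<in> carrier_mat r r" using M by simp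
  have "transpose_mat M *\<^sub>v v = 0\<^sub>v r"
  proof (rule eq_vecI)
    fix i assume i: "i < dim_vec (0\<^sub>v r :: real vec)"
    hence i': "i < r" by simp
    have "L ! i \<in> set (cols Y)" using L SY i' lenL nth_mem by blast
    then obtain j where j: "j < m" "L ! i = col Y j" using Y by (auto simp: in_set_conv_nth)
    have "(transpose_mat M *\<^sub>v v) $ i = col M i \<bullet> v" using M i' by simp
    also have "col M i = L ! i" using cM i' lenL M by (metis cols_nth carrier_matD(2))
    finally show "(transpose_mat M *\<^sub>v v) $ i = 0\<^sub>v r $ i" using j orth i' by simp
  qed (use M in simp)
  moreover have "det (transpose_mat M) \<noteq> 0" using dM det_transpose[OF M] by simp
  ultimately show ?thesis using det_0_iff_vec_prod_zero[OF Mt] v by blast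
qed


lemma sp_self_ge: "(v::real vec) \<bullet> v \<ge> 0" unfolding scalar_prod_def by (auto intro: sum_nonneg)

lemma sp_self_eq0: assumes v: "v \<in> carrier_vec k" and z: "(v::real vec) \<bullet> v = 0" shows "v = 0\<^sub>v k"
proof (rule eq_vecI)
  fix i assume i: "i < dim_vec (0\<^sub>v k :: real vec)"
  have "(\<Sum>j\<in>{0..<dim_vec v}. v $ j * v $ j) = 0" using z unfolding scalar_prod_def by simp
  hence "\<forall>j\<in>{0..<dim_vec v}. v $ j * v $ j = 0" by (subst (asm) sum_nonneg_eq_0_iff) auto
  thus "v $ i = 0\<^sub>v k $ i" using i v by auto
qed (use v in auto)

lemma sq_expand: assumes u: "u \<in> carrier_vec k" and v: "v \<in> carrier_vec k"
  shows "((u::real vec) - v) \<bullet> (u - v) = u \<bullet> u + v \<bullet> v - 2 * (u \<bullet> v)"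
proof -
  have "(u - v) \<bullet> (u - v) = (\<Sum>i<k. (u$i - v$i) * (u$i - v$i))"
    using u v unfolding scalar_prod_def by (auto intro!: sum.cong simp: lessThan_atLeast0)
  also have "\<dots> = (\<Sum>i<k. u$i * u$i + v$i * v$i - 2 * (u$i * v$i))" by (intro sum.cong) (auto simp: algebra_simps)
  also have "\<dots> = (\<Sum>i<k. u$i * u$i) + (\<Sum>i<k. v$i * v$i) - 2 * (\<Sum>i<k. u$i * v$i)"
    by (simp add: sum.distrib sum_subtractf sum_distrib_left)
  also have "\<dots> = u \<bullet> u + v \<bullet> v - 2 * (u \<bullet> v)"
    using u v unfolding scalar_prod_def by (simp add: lessThan_atLeast0)
  finally show ?thesis .
qed

lemma cpm_shift: assumes N: "N \<in> carrier_mat k k"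
  shows "char_poly_matrix (1\<^sub>m k + N) = [:-1,1:] \<cdot>\<^sub>m 1\<^sub>m k - map_mat (\<lambda>a. [:a:]) N"
  unfolding char_poly_matrix_def using N
  by (intro eq_matI) (auto simp: one_pCons)


theorem lemma3p2:
  fixes n r :: nat and D Delta :: "real mat" and w :: "real vec"
  assumes n2: "n \<ge> 2"
    and us: "unit_spherical_edm n D r"
    and wc: "w \<in> carrier_vec n"
    and Dw: "D *\<^sub>v w = ones_vec n"
    and Dc: "Delta \<in> carrier_mat n n"
    and DD: "D = 2 \<cdot>\<^sub>m (ones_mat n - 1\<^sub>m n) + 2 \<cdot>\<^sub>m Delta"
  shows "lambda_max Delta = 1 \<and> eigenvector Delta w (lambda_max Delta) \<and>
         r = n - eig_mult Delta (lambda_max Delta)"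
proof -
  obtain p c where cfg: "edm_config n D r p" and cc: "c \<in> carrier_vec r"
    and sph: "\<And>i. i < n \<Longrightarrow> sqdist_vec (p i) c = 1"
    using us unfolding unit_spherical_edm_def by blast
  have pc: "\<And>i. i < n \<Longrightarrow> p i \<in> carrier_vec r" and
    rk: "vec_space.rank r (mat r n (\<lambda>(a, j). (p j - p 0) $ a)) = r" and
    Dij: "\<And>i j. i < n \<Longrightarrow> j < n \<Longrightarrow> D $$ (i, j) = sqdist_vec (p i) (p j)"
    using cfg unfolding edm_config_def affinely_spanning_def by auto
  have Dcar: "D \<in> carrier_mat n n" using cfg unfolding edm_config_def by simp
  define X where "X = mat r n (\<lambda>(a, i). (p i - c) $ a)"
  define G where "G = transpose_mat X * X"
  define H where "H = X * transpose_mat X"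
  have X: "X \<in> carrier_mat r n" unfolding X_def by simp
  have Xt: "transpose_mat X \<in> carrier_mat n r" using X by simp
  have Gc: "G \<in> carrier_mat n n" unfolding G_def using X by simp
  have Hc: "H \<in> carrier_mat r r" unfolding H_def using X by simp
  have colX: "\<And>i. i < n \<Longrightarrow> col X i = p i - c" 
    unfolding X_def using pc cc by (auto intro!: eq_vecI)
  have Gij: "\<And>i j. i < n \<Longrightarrow> j < n \<Longrightarrow> G $$ (i, j) = (p i - c) \<bullet> (p j - c)"
    unfolding G_def using X colX by simp
  have un: "\<And>i. i < n \<Longrightarrow> (p i - c) \<bullet> (p i - c) = 1"
    using sph unfolding sqdist_vec_def by simp
  have Dij2: "\<And>i j. i < n \<Longrightarrow> j < n \<Longrightarrow> D $$ (i, j) = 2 - 2 * G $$ (i, j)"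
  proof -
    fix i j assume i: "i < n" and j: "j < n"
    have "p i - p j = (p i - c) - (p j - c)" using pc[OF i] pc[OF j] cc by (auto intro!: eq_vecI)
    hence "D $$ (i, j) = ((p i - c) - (p j - c)) \<bullet> ((p i - c) - (p j - c))"
      using Dij[OF i j] unfolding sqdist_vec_def by simp
    also have "\<dots> = (p i - c) \<bullet> (p i - c) + (p j - c) \<bullet> (p j - c) - 2 * ((p i - c) \<bullet> (p j - c))"
      by (rule sq_expand[of _ r]) (use pc[OF i] pc[OF j] cc in auto)
    finally show "D $$ (i, j) = 2 - 2 * G $$ (i, j)" using un[OF i] un[OF j] Gij[OF i j] by simp
  qed
  have DeltaG: "Delta = 1\<^sub>m n - G"
  proof (rule eq_matI)
    fix i j assume i: "i < dim_row (1\<^sub>m n - G)" and j: "j < dim_col (1\<^sub>m n - G)"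
    hence i': "i < n" and j': "j < n" using Gc by auto
    have "D $$ (i, j) = 2 * ((if i = j then 0 else 1)) + 2 * Delta $$ (i, j)"
      using DD i' j' Dc by (simp add: ones_mat_def)
    thus "Delta $$ (i, j) = (1\<^sub>m n - G) $$ (i, j)" using Dij2[OF i' j'] i' j' Gc by auto
  qed (use Dc Gc in auto)
  have n0: "0 < n" using n2 by simp
  have spanz: "\<And>v. v \<in> carrier_vec r \<Longrightarrow> (\<And>j. j < n \<Longrightarrow> (p j - c) \<bullet> v = (p 0 - c) \<bullet> v) \<Longrightarrow> v = 0\<^sub>v r"
  proof -
    fix v assume v: "v \<in> carrier_vec r" and o: "\<And>j. j < n \<Longrightarrow> (p j - c) \<bullet> v = (p 0 - c) \<bullet> v"
    show "v = 0\<^sub>v r"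
    proof (rule span_zero[OF _ rk v])
      show "mat r n (\<lambda>(a, j). (p j - p 0) $ a) \<in> carrier_mat r n" by simp
      fix j assume j: "j < n"
      have "col (mat r n (\<lambda>(a, j). (p j - p 0) $ a)) j = (p j - c) - (p 0 - c)"
        using pc[OF j] pc[OF n0] cc j by (auto intro!: eq_vecI)
      also have "\<dots> \<bullet> v = (p j - c) \<bullet> v - (p 0 - c) \<bullet> v"
        by (rule minus_scalar_prod_distrib[of _ r]) (use pc[OF j] pc[OF n0] cc v in auto)
      finally show "col (mat r n (\<lambda>(a, j). (p j - p 0) $ a)) j \<bullet> v = 0" using o[OF j] by simp
    qed
  qed
  have Xtv: "\<And>v i. v \<in> carrier_vec r \<Longrightarrow> i < n \<Longrightarrow> (transpose_mat X *\<^sub>v v) $ i = (p i - c) \<bullet> v"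
    using X colX by simp
  have detH: "det H \<noteq> 0"
  proof
    assume "det H = 0"
    then obtain v where v: "v \<in> carrier_vec r" "v \<noteq> 0\<^sub>v r" "H *\<^sub>v v = 0\<^sub>v r"
      using det_0_iff_vec_prod_zero[OF Hc] by blast
    define u where "u = transpose_mat X *\<^sub>v v"
    have uc: "u \<in> carrier_vec n" unfolding u_def using Xt v by simp
    have "u \<bullet> u = v \<bullet> (X *\<^sub>v u)" unfolding u_def
      by (rule transpose_vec_mult_scalar[OF X _ v(1)]) (use uc u_def in simp)
    also have "X *\<^sub>v u = H *\<^sub>v v" unfolding u_def H_def using X Xt v by simp
    finally have "u \<bullet> u = 0" using v by simp
    hence u0: "u = 0\<^sub>v n" using sp_self_eq0[OF uc] by simp
    have "\<And>j. j < n \<Longrightarrow> (p j - c) \<bullet> v = 0"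
    proof -
      fix j assume j: "j < n"
      have "(p j - c) \<bullet> v = u $ j" unfolding u_def using Xtv[OF v(1) j] by simp
      thus "(p j - c) \<bullet> v = 0" using u0 j by simp
    qed
    hence "v = 0\<^sub>v r" using spanz[OF v(1)] n0 by simp
    with v(2) show False by simp
  qed
  define sw where "sw = (\<Sum>j<n. w $ j)"
  have Gwi: "\<And>i. i < n \<Longrightarrow> (G *\<^sub>v w) $ i = (2 * sw - 1) / 2"
  proof -
    fix i assume i: "i < n"
    have "1 = (D *\<^sub>v w) $ i" using Dw i by (simp add: ones_vec_def)
    also have "\<dots> = (\<Sum>j<n. D $$ (i, j) * w $ j)"
      using i wc Dcar by (auto simp: scalar_prod_def lessThan_atLeast0 intro!: sum.cong)
    also have "\<dots> = (\<Sum>j<n. 2 * w $ j - 2 * (G $$ (i, j) * w $ j))"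
      using Dij2 i by (intro sum.cong) (auto simp: left_diff_distrib)
    also have "\<dots> = 2 * sw - 2 * (\<Sum>j<n. G $$ (i, j) * w $ j)"
      unfolding sw_def by (simp add: sum_subtractf sum_distrib_left)
    also have "(\<Sum>j<n. G $$ (i, j) * w $ j) = (G *\<^sub>v w) $ i"
      using i wc Gc by (auto simp: scalar_prod_def lessThan_atLeast0 intro!: sum.cong)
    finally show "(G *\<^sub>v w) $ i = (2 * sw - 1) / 2" by simp
  qed
  define u where "u = X *\<^sub>v w"
  have uc: "u \<in> carrier_vec r" unfolding u_def using X wc by simp
  have Gu: "\<And>i. i < n \<Longrightarrow> (G *\<^sub>v w) $ i = (p i - c) \<bullet> u"
    unfolding G_def u_def using Xtv[OF uc[unfolded u_def]] X Xt wc by simp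
  have alpha: "(2 * sw - 1) / 2 = 0"
  proof (rule ccontr)
    assume a: "(2 * sw - 1) / 2 \<noteq> 0"
    define y where "y = (1 / ((2 * sw - 1) / 2)) \<cdot>\<^sub>v u"
    have yc: "y \<in> carrier_vec r" unfolding y_def using uc by simp
    have y1: "\<And>j. j < n \<Longrightarrow> (p j - c) \<bullet> y = 1"
    proof -
      fix j assume j: "j < n"
      have "(p j - c) \<bullet> y = (1 / ((2 * sw - 1) / 2)) * ((p j - c) \<bullet> u)"
        unfolding y_def using uc pc[OF j] cc by simp
      also have "\<dots> = 1" using Gu[OF j] Gwi[OF j] a by simp
      finally show "(p j - c) \<bullet> y = 1" .
    qed
    have "y = 0\<^sub>v r" using spanz[OF yc] y1 n0 by simp
    hence "(p 0 - c) \<bullet> y = 0" using pc[OF n0] cc by simp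
    with y1[OF n0] show False by simp
  qed
  have Gw: "G *\<^sub>v w = 0\<^sub>v n"
    using Gwi alpha Gc wc by (intro eq_vecI) auto
  have w0: "w \<noteq> 0\<^sub>v n"
  proof
    assume "w = 0\<^sub>v n"
    hence "D *\<^sub>v w = 0\<^sub>v n" using Dcar by (auto intro!: eq_vecI simp: scalar_prod_def)
    hence "(ones_vec n) $ 0 = (0\<^sub>v n :: real vec) $ 0" using Dw by simp
    thus False using n0 by (simp add: ones_vec_def)
  qed
  have ev1: "eigenvector Delta w 1"
    unfolding eigenvector_def using Dc wc w0 Gw DeltaG Gc
    by (simp add: minus_mult_distrib_mat_vec[OF one_carrier_mat Gc wc])
  have evle: "\<And>k. eigenvalue Delta k \<Longrightarrow> k \<le> 1"
  proof -
    fix k assume "eigenvalue Delta k"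
    then obtain v where v: "v \<in> carrier_vec n" "v \<noteq> 0\<^sub>v n" "Delta *\<^sub>v v = k \<cdot>\<^sub>v v"
      unfolding eigenvalue_def eigenvector_def using Dc by auto
    have "G *\<^sub>v v = v - Delta *\<^sub>v v" using DeltaG Gc v(1) by (auto simp: minus_mult_distrib_mat_vec[OF one_carrier_mat Gc v(1)] intro!: eq_vecI)
    hence Gv: "G *\<^sub>v v = (1 - k) \<cdot>\<^sub>v v" using v by (auto intro!: eq_vecI simp: algebra_simps)
    have Xvc: "X *\<^sub>v v \<in> carrier_vec r" using X v by simp
    have "(G *\<^sub>v v) \<bullet> v = (X *\<^sub>v v) \<bullet> (X *\<^sub>v v)"
      unfolding G_def using transpose_vec_mult_scalar[OF X v(1) Xvc] X Xt v by simp
    hence "(1 - k) * (v \<bullet> v) \<ge> 0" using Gv sp_self_ge[of "X *\<^sub>v v"] v by simp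
    moreover have "v \<bullet> v > 0" using sp_self_ge[of v] sp_self_eq0[OF v(1)] v(2) by force
    ultimately show "k \<le> 1" by (simp add: zero_le_mult_iff)
  qed
  have cp0: "char_poly Delta \<noteq> 0" using degree_monic_char_poly[OF Dc] by auto
  have fin: "finite {k. eigenvalue Delta k}"
    using poly_roots_finite[OF cp0] eigenvalue_root_char_poly[OF Dc] by simp
  have lm: "lambda_max Delta = 1"
    unfolding lambda_max_def using fin evle ev1 unfolding eigenvalue_def
    by (intro Max_eqI) auto
  define z :: "real poly" where "z = [:-1,1:]"
  define A where "A = map_mat (\<lambda>a. [:a:]) (transpose_mat X)"
  define B where "B = map_mat (\<lambda>a. [:a:]) (- X)"
  have mX: "- X \<in> carrier_mat r n" using X by simp
  have Ac: "A \<in> carrier_mat n r" unfolding A_def using Xt by simp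
  have Bc: "B \<in> carrier_mat r n" unfolding B_def using X by simp
  have syl: "z^n * det (z \<cdot>\<^sub>m 1\<^sub>m r - B * A) = z^r * det (z \<cdot>\<^sub>m 1\<^sub>m n - A * B)"
    by (rule sylvester_det[OF Ac Bc])
  have AB: "A * B = map_mat (\<lambda>a. [:a:]) (transpose_mat X * (- X))"
    unfolding A_def B_def using map_poly_mult(1)[OF Xt mX] by simp
  have BA: "B * A = map_mat (\<lambda>a. [:a:]) ((- X) * transpose_mat X)"
    unfolding A_def B_def using map_poly_mult(1)[OF mX Xt] by simp
  have N1: "transpose_mat X * (- X) \<in> carrier_mat n n" using X by simp
  have N2: "(- X) * transpose_mat X \<in> carrier_mat r r" using X by simp
  have D1: "Delta = 1\<^sub>m n + transpose_mat X * (- X)"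
    unfolding DeltaG G_def using X by (auto intro!: eq_matI)
  have cD: "char_poly Delta = det (z \<cdot>\<^sub>m 1\<^sub>m n - A * B)"
    unfolding char_poly_def D1 cpm_shift[OF N1] AB z_def ..
  define q where "q = char_poly (1\<^sub>m r + (- X) * transpose_mat X)"
  have cH: "q = det (z \<cdot>\<^sub>m 1\<^sub>m r - B * A)"
    unfolding q_def char_poly_def cpm_shift[OF N2] BA z_def ..
  have q1: "poly q 1 \<noteq> 0"
  proof
    assume "poly q 1 = 0"
    hence "eigenvalue (1\<^sub>m r + (- X) * transpose_mat X) 1"
      unfolding q_def using eigenvalue_root_char_poly[of _ r] N2 by (meson add_carrier_mat one_carrier_mat)
    then obtain v where v: "v \<in> carrier_vec r" "v \<noteq> 0\<^sub>v r"
      "(1\<^sub>m r + (- X) * transpose_mat X) *\<^sub>v v = v"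
      unfolding eigenvalue_def eigenvector_def using N2 by auto
    have mH: "(- X) * transpose_mat X = - H" unfolding H_def by simp
    have mHc: "- H \<in> carrier_mat r r" using Hc by simp
    have "(1\<^sub>m r + (- X) * transpose_mat X) *\<^sub>v v = v + - (H *\<^sub>v v)"
      unfolding mH add_mult_distrib_mat_vec[OF one_carrier_mat mHc v(1)]
      using uminus_mult_mat_vec[of v H] Hc v(1) by simp
    hence e: "v + - (H *\<^sub>v v) = v" using v(3) by simp
    have "H *\<^sub>v v = 0\<^sub>v r"
    proof (rule eq_vecI)
      fix i assume i: "i < dim_vec (0\<^sub>v r :: real vec)"
      have "(v + - (H *\<^sub>v v)) $ i = v $ i" using e by simp
      thus "(H *\<^sub>v v) $ i = 0\<^sub>v r $ i" using i Hc v(1) by simp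
    qed (use Hc in simp)
    thus False using det_0_iff_vec_prod_zero[OF Hc] v detH by blast
  qed
  have z0: "z \<noteq> 0" unfolding z_def by simp
  have q0: "q \<noteq> 0" using q1 by auto
  have eq: "z^n * q = z^r * char_poly Delta" using syl cH cD by simp
  have ne: "z^n * q \<noteq> 0" using z0 q0 by simp
  have o1: "Polynomial.order 1 (z^n * q) = n"
    using order_mult[OF ne] order_0I[OF q1] order_power_n_n[of 1 n] unfolding z_def by simp
  have o2: "Polynomial.order 1 (z^r * char_poly Delta) = r + Polynomial.order 1 (char_poly Delta)"
    using order_mult[of "z^r" "char_poly Delta" 1] ne eq order_power_n_n[of 1 r] unfolding z_def by simp
  have ord: "n = r + Polynomial.order 1 (char_poly Delta)" using o1 o2 eq by simp
  show ?thesis using lm ev1 ord unfolding eig_mult_def by simp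
qed
end
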